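(* Let $E$ be a countable subset of $2^{\mathfrak c}$, let $\emptyset\neq I\subseteq E$, and let $F\subseteq E$ be finite. For each $\xi\in I$ let $k_\xi\in\omega$, let $\{p_\xi:\xi\in I\}$ be a family of pairwise Rudin–Keisler incomparable selective ultrafilters, let $g_\xi:\omega\to([E]^{<\omega})^{k_\xi}$ be a function such that the family $\{g^j_\xi(m):j<k_\xi,\ m\in\omega\}$ is linearly independent, and let $d_\xi\in([E]^{<\omega})^{k_\xi}$. Let also $\{y_n:n\in\omega\}\subseteq E$ be a faithfully indexed (injective) sequence. Then there exist a strictly increasing sequence $\{b_i:i\in\omega\}\subseteq\omega$, a surjective function $r:\omega\to I$ and a sequence $\{E_i:i\in\omega\}$ of finite subsets of $E$ such that: (a) $F\subseteq E_0$; (b) $E=\bigcup_{i\in\omega}E_i$; (c) $r(m)\in E_m$ for each $m\in\omega$; (d) $\bigcup\{d^j_{r(m)}:j<k_{r(m)}\}\subseteq E_m$ for each $m\in\omega$; (e) $E_{m+1}\supseteq \bigcup\{g^j_\xi(b_m):\xi\in E_m\cap I,\ j<k_\xi\}\cup E_m$ for each $m\in\omega$; (f) $\{g^j_{r(m)}(b_m):j<k_{r(m)}\}\cup\{\{\mu\}:\mu\in E_m\}$ is linearly independent for each $m\in\omega$; (g) $\{b_i:i\in r^{-1}(\xi)\}\in p_\xi$ for every $\xi\in I$; (h) there is a strictly increasing sequence $(N_i)_{i\in\omega}$ of natural numbers such that $\{n\in\omega:y_n\in E_i\}=\{0,1,\dots,2N_i-1\}$ for each $i\in\omega$.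
   Context: $\mathfrak c$ is the cardinality of the continuum and $2^{\mathfrak c}$ is regarded as a set of ordinals. $[E]^{<\omega}$ is the set of finite subsets of $E$, a vector space over the field $2=\{0,1\}$ under symmetric difference; linear independence refers to this structure (for indexed families, so members are distinct). For a tuple $g\in([E]^{<\omega})^k$, $g^j$ denotes its $j$-th coordinate. Selective ultrafilter: a free ultrafilter $p$ on $\omega$ such that for every partition $\{A_n\}$ of $\omega$ either some $A_n\in p$ or some $B\in p$ meets each $A_n$ in exactly one point. Rudin–Keisler order: $p\le_{RK}q$ iff $p=\{A: f^{-1}(A)\in q\}$ for some $f:\omega\to\omega$; incomparable means neither $p\le_{RK}q$ nor $q\le_{RK}p$. *)

theory Defs
  imports Main "HOL-Library.Countable_Set"
begin

text \<open>Sum in the vector space of finite sets over the field 2 (symmetric difference):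
  the sum of the members f j, j in S, consists of the points lying in an odd number of them.\<close>
definition symdiff_sum :: "'j set \<Rightarrow> ('j \<Rightarrow> 'a set) \<Rightarrow> 'a set" where
  "symdiff_sum S f = {x. odd (card {j \<in> S. x \<in> f j})}"

definition lin_indep :: "'j set \<Rightarrow> ('j \<Rightarrow> 'a set) \<Rightarrow> bool" where
  "lin_indep J f \<longleftrightarrow> inj_on f J \<and>
     (\<forall>S. S \<subseteq> J \<and> finite S \<and> S \<noteq> {} \<longrightarrow> symdiff_sum S f \<noteq> {})"

definition ultrafilter_on_nat :: "nat set set \<Rightarrow> bool" where
  "ultrafilter_on_nat p \<longleftrightarrow>
     {} \<notin> p \<and> UNIV \<in> p \<and>
     (\<forall>A B. A \<in> p \<and> A \<subseteq> B \<longrightarrow> B \<in> p) \<and>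
     (\<forall>A B. A \<in> p \<and> B \<in> p \<longrightarrow> A \<inter> B \<in> p) \<and>
     (\<forall>A. A \<in> p \<or> - A \<in> p)"

definition free_ultrafilter_on_nat :: "nat set set \<Rightarrow> bool" where
  "free_ultrafilter_on_nat p \<longleftrightarrow> ultrafilter_on_nat p \<and> (\<forall>A. finite A \<longrightarrow> A \<notin> p)"

definition is_partition_nat :: "(nat \<Rightarrow> nat set) \<Rightarrow> bool" where
  "is_partition_nat A \<longleftrightarrow> (\<forall>n. A n \<noteq> {}) \<and> (\<forall>m n. m \<noteq> n \<longrightarrow> A m \<inter> A n = {})
     \<and> (\<Union>n. A n) = UNIV"

definition selective_ultrafilter :: "nat set set \<Rightarrow> bool" where
  "selective_ultrafilter p \<longleftrightarrow> free_ultrafilter_on_nat p \<and>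
     (\<forall>A. is_partition_nat A \<longrightarrow>
        (\<exists>n. A n \<in> p) \<or> (\<exists>B\<in>p. \<forall>n. \<exists>!x. x \<in> B \<inter> A n))"

definition rk_le :: "nat set set \<Rightarrow> nat set set \<Rightarrow> bool" where
  "rk_le p q \<longleftrightarrow> (\<exists>f :: nat \<Rightarrow> nat. p = {A. f -` A \<in> q})"

definition rk_incomparable :: "nat set set \<Rightarrow> nat set set \<Rightarrow> bool" where
  "rk_incomparable p q \<longleftrightarrow> \<not> rk_le p q \<and> \<not> rk_le q p"

end

theory Submission
  imports Defs "HOL-Library.Countable_Set"
begin


lemma sds_mem: "x \<in> symdiff_sum S f \<longleftrightarrow> odd (card {j \<in> S. x \<in> f j})"
  by (simp add: symdiff_sum_def)

lemma sds_union:
  assumes "finite A" "finite B" "A \<inter> B = {}"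
  shows "x \<in> symdiff_sum (A \<union> B) f \<longleftrightarrow> ((x \<in> symdiff_sum A f) \<noteq> (x \<in> symdiff_sum B f))"
proof -
  have "{j \<in> A \<union> B. x \<in> f j} = {j \<in> A. x \<in> f j} \<union> {j \<in> B. x \<in> f j}" by auto
  moreover have "card ({j \<in> A. x \<in> f j} \<union> {j \<in> B. x \<in> f j}) = card {j \<in> A. x \<in> f j} + card {j \<in> B. x \<in> f j}"
    using assms by (intro card_Un_disjoint) auto
  ultimately show ?thesis by (simp add: sds_mem)
qed

lemma sds_image:
  assumes "inj_on h A"
  shows "symdiff_sum (h ` A) f = symdiff_sum A (f \<circ> h)"
proof -
  have "\<And>x. {t \<in> h ` A. x \<in> f t} = h ` {j \<in> A. x \<in> f (h j)}" by auto
  moreover have "\<And>x. card (h ` {j \<in> A. x \<in> f (h j)}) = card {j \<in> A. x \<in> f (h j)}"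
    using assms by (intro card_image) (auto intro: inj_on_subset)
  ultimately show ?thesis by (simp add: symdiff_sum_def)
qed

lemma sds_single: "symdiff_sum {j} f = f j"
proof -
  have "\<And>x. {ja \<in> {j}. x \<in> f ja} = (if x \<in> f j then {j} else {})" by auto
  then show ?thesis by (auto simp: symdiff_sum_def)
qed

lemma sds_singletons: "finite M \<Longrightarrow> symdiff_sum M (\<lambda>\<mu>. {\<mu>}) = M"
proof -
  have "\<And>x. {j \<in> M. x \<in> {j}} = (if x \<in> M then {x} else {})" by auto
  then show ?thesis by (auto simp: symdiff_sum_def)
qed

definition good :: "('a \<Rightarrow> nat \<Rightarrow> nat \<Rightarrow> 'a set) \<Rightarrow> ('a \<Rightarrow> nat) \<Rightarrow> 'a \<Rightarrow> 'a set \<Rightarrow> nat \<Rightarrow> bool" where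
  "good g k \<xi> S n \<longleftrightarrow> (\<forall>J. J \<subseteq> {..<k \<xi>} \<and> J \<noteq> {} \<longrightarrow> \<not> symdiff_sum J (g \<xi> n) \<subseteq> S)"

lemma good_mono: "S \<subseteq> S' \<Longrightarrow> good g k \<xi> S' n \<Longrightarrow> good g k \<xi> S n"
  unfolding good_def by blast

lemma bad_finite:
  assumes S: "finite S" and li: "lin_indep {(j, m). j < k \<xi>} (\<lambda>(j, m). g \<xi> m j)"
  shows "finite {n. \<not> good g k \<xi> S n}"
proof (rule ccontr)
  let ?Bad = "{n. \<not> good g k \<xi> S n}"
  assume inf: "infinite ?Bad"
  have "\<forall>n\<in>?Bad. \<exists>J. J \<subseteq> {..<k \<xi>} \<and> J \<noteq> {} \<and> symdiff_sum J (g \<xi> n) \<subseteq> S"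
    by (auto simp: good_def)
  then obtain J where J: "\<And>n. n \<in> ?Bad \<Longrightarrow> J n \<subseteq> {..<k \<xi>} \<and> J n \<noteq> {} \<and> symdiff_sum (J n) (g \<xi> n) \<subseteq> S"
    by metis
  define V where "V n = symdiff_sum (J n) (g \<xi> n)" for n
  have "V ` ?Bad \<subseteq> Pow S" using J by (auto simp: V_def)
  hence "finite (V ` ?Bad)" using S by (meson finite_Pow_iff finite_subset)
  hence "\<not> inj_on V ?Bad" using inf finite_imageD by blast
  then obtain n n' where nn: "n \<in> ?Bad" "n' \<in> ?Bad" "n \<noteq> n'" "V n = V n'"
    unfolding inj_on_def by blast
  define T1 where "T1 = (\<lambda>j. (j, n)) ` J n"
  define T2 where "T2 = (\<lambda>j. (j, n')) ` J n'"
  let ?f = "\<lambda>(j, m). g \<xi> m j"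
  have fJ: "finite (J n)" "finite (J n')" using J nn by (meson finite_lessThan finite_subset)+
  have fin: "finite T1" "finite T2" using fJ by (auto simp: T1_def T2_def)
  have disj: "T1 \<inter> T2 = {}" using nn by (auto simp: T1_def T2_def)
  have s1: "symdiff_sum T1 ?f = V n" unfolding T1_def V_def
    by (subst sds_image) (auto simp: inj_on_def comp_def)
  have s2: "symdiff_sum T2 ?f = V n'" unfolding T2_def V_def
    by (subst sds_image) (auto simp: inj_on_def comp_def)
  have "symdiff_sum (T1 \<union> T2) ?f = {}"
  proof -
    { fix x assume "x \<in> symdiff_sum (T1 \<union> T2) ?f"
      hence "(x \<in> symdiff_sum T1 ?f) \<noteq> (x \<in> symdiff_sum T2 ?f)" using sds_union[OF fin disj, of x ?f] by simp
      hence False using s1 s2 nn(4) by simp }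
    thus ?thesis by blast
  qed
  moreover have "T1 \<union> T2 \<subseteq> {(j, m). j < k \<xi>}" using J nn by (auto simp: T1_def T2_def)
  moreover have "T1 \<union> T2 \<noteq> {}" using J nn by (auto simp: T1_def)
  ultimately show False using li fin unfolding lin_indep_def by blast
qed

lemma good_indep:
  assumes S: "finite S" and gd: "good g k \<xi> S n"
  shows "lin_indep (Inl ` {..<k \<xi>} \<union> Inr ` S)
            (\<lambda>x. case x of Inl j \<Rightarrow> g \<xi> n j | Inr \<mu> \<Rightarrow> {\<mu>})"
proof -
  let ?F = "\<lambda>x. case x of Inl j \<Rightarrow> g \<xi> n j | Inr \<mu> \<Rightarrow> {\<mu>}"
  have inj: "inj_on ?F (Inl ` {..<k \<xi>} \<union> Inr ` S)"
  proof (rule inj_onI)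
    fix x y assume x: "x \<in> Inl ` {..<k \<xi>} \<union> Inr ` S" and y: "y \<in> Inl ` {..<k \<xi>} \<union> Inr ` S"
      and eq: "?F x = ?F y"
    show "x = y"
    proof (cases x)
      case (Inl j)
      then have j: "j < k \<xi>" using x by auto
      show ?thesis
      proof (cases y)
        case (Inl j')
        then have j': "j' < k \<xi>" using y by auto
        show ?thesis
        proof (rule ccontr)
          assume "x \<noteq> y"
          hence ne: "j \<noteq> j'" using Inl \<open>x = Inl j\<close> by auto
          have "symdiff_sum ({j} \<union> {j'}) (g \<xi> n) = {}"
            using sds_union[of "{j}" "{j'}" _ "g \<xi> n"] ne eq Inl \<open>x = Inl j\<close>
            by (auto simp: sds_single)
          thus False using gd j j' unfolding good_def by (metis Un_insert_left bot.extremum empty_not_insert insert_subset lessThan_iff sup_bot_left)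
        qed
      next
        case (Inr \<mu>)
        then have "\<mu> \<in> S" using y by auto
        moreover have "symdiff_sum {j} (g \<xi> n) = {\<mu>}" using eq Inr \<open>x = Inl j\<close> by (simp add: sds_single)
        ultimately show ?thesis using gd j unfolding good_def by (metis empty_iff empty_subsetI insert_subset lessThan_iff)
      qed
    next
      case (Inr \<mu>)
      then have mu: "\<mu> \<in> S" using x by auto
      show ?thesis
      proof (cases y)
        case (Inl j')
        then have "j' < k \<xi>" using y by auto
        moreover have "symdiff_sum {j'} (g \<xi> n) = {\<mu>}" using eq Inl \<open>x = Inr \<mu>\<close> by (simp add: sds_single)
        ultimately show ?thesis using gd mu unfolding good_def by (metis empty_iff empty_subsetI insert_subset lessThan_iff)
      next
        case (Inr \<nu>)
        then show ?thesis using eq \<open>x = Inr \<mu>\<close> by auto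
      qed
    qed
  qed
  have sums: "symdiff_sum T ?F \<noteq> {}" if T: "T \<subseteq> Inl ` {..<k \<xi>} \<union> Inr ` S" "finite T" "T \<noteq> {}" for T
  proof
    assume z: "symdiff_sum T ?F = {}"
    define J where "J = Inl -` T"
    define M where "M = Inr -` T"
    have JK: "J \<subseteq> {..<k \<xi>}" using T by (auto simp: J_def)
    have MS: "M \<subseteq> S" using T by (auto simp: M_def)
    have fJ: "finite J" using JK finite_subset by blast
    have fM: "finite M" using MS S finite_subset by blast
    have Teq: "T = Inl ` J \<union> Inr ` M"
    proof
      show "T \<subseteq> Inl ` J \<union> Inr ` M"
      proof
        fix t assume "t \<in> T" thus "t \<in> Inl ` J \<union> Inr ` M" by (cases t) (auto simp: J_def M_def)
      qed
    qed (auto simp: J_def M_def)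
    have s1: "symdiff_sum (Inl ` J) ?F = symdiff_sum J (g \<xi> n)"
      by (subst sds_image) (auto simp: comp_def)
    have s2: "symdiff_sum (Inr ` M) ?F = M"
      by (subst sds_image) (auto simp: comp_def sds_singletons fM)
    have eqJM: "symdiff_sum J (g \<xi> n) = M"
    proof (intro set_eqI)
      fix x
      have "x \<in> symdiff_sum T ?F \<longleftrightarrow> ((x \<in> symdiff_sum (Inl ` J) ?F) \<noteq> (x \<in> symdiff_sum (Inr ` M) ?F))"
        unfolding Teq using fJ fM by (intro sds_union) auto
      thus "x \<in> symdiff_sum J (g \<xi> n) \<longleftrightarrow> x \<in> M" using z s1 s2 by auto
    qed
    show False
    proof (cases "J = {}")
      case True
      then have "M = {}" using eqJM by (simp add: symdiff_sum_def)
      thus False using T Teq True by auto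
    next
      case False
      thus False using gd JK eqJM MS unfolding good_def by blast
    qed
  qed
  show ?thesis unfolding lin_indep_def using inj sums by blast
qed




section \<open>Ultrafilter basics\<close>

lemma uf_up: "ultrafilter_on_nat p \<Longrightarrow> A \<in> p \<Longrightarrow> A \<subseteq> B \<Longrightarrow> B \<in> p"
  unfolding ultrafilter_on_nat_def by blast
lemma uf_int: "ultrafilter_on_nat p \<Longrightarrow> A \<in> p \<Longrightarrow> B \<in> p \<Longrightarrow> A \<inter> B \<in> p"
  unfolding ultrafilter_on_nat_def by blast
lemma uf_empty: "ultrafilter_on_nat p \<Longrightarrow> {} \<notin> p"
  unfolding ultrafilter_on_nat_def by blast
lemma uf_UNIV: "ultrafilter_on_nat p \<Longrightarrow> UNIV \<in> p"
  unfolding ultrafilter_on_nat_def by blast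
lemma uf_compl: "ultrafilter_on_nat p \<Longrightarrow> A \<notin> p \<Longrightarrow> - A \<in> p"
  unfolding ultrafilter_on_nat_def by blast
lemma uf_compl2: "ultrafilter_on_nat p \<Longrightarrow> A \<in> p \<Longrightarrow> - A \<notin> p"
  using uf_int uf_empty by fastforce
lemma uf_Un: "ultrafilter_on_nat p \<Longrightarrow> A \<union> B \<in> p \<Longrightarrow> A \<in> p \<or> B \<in> p"
proof (rule ccontr)
  assume u: "ultrafilter_on_nat p" and ab: "A \<union> B \<in> p" and n: "\<not> (A \<in> p \<or> B \<in> p)"
  hence "-A \<inter> -B \<in> p" using uf_compl uf_int by blast
  hence "(A \<union> B) \<inter> (-A \<inter> -B) \<in> p" using uf_int u ab by blast
  moreover have "(A \<union> B) \<inter> (-A \<inter> -B) = {}" by auto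
  ultimately show False using uf_empty u by metis
qed

lemma uf_finite_Un:
  assumes u: "ultrafilter_on_nat p" and f: "finite X" and X: "\<forall>A\<in>X. A \<notin> p"
  shows "\<Union>X \<notin> p"
  using f X
proof (induction X rule: finite_induct)
  case empty thus ?case using uf_empty u by simp
next
  case (insert x F)
  thus ?case using uf_Un[OF u, of x "\<Union>F"] by auto
qed

lemma uf_same: "ultrafilter_on_nat p \<Longrightarrow> S \<in> p \<Longrightarrow> X \<inter> S = Y \<inter> S \<Longrightarrow> X \<in> p \<Longrightarrow> Y \<in> p"
  by (metis inf_le1 uf_int uf_up)

lemma free_uf: "free_ultrafilter_on_nat p \<Longrightarrow> ultrafilter_on_nat p"
  unfolding free_ultrafilter_on_nat_def by blast
lemma free_fin: "free_ultrafilter_on_nat p \<Longrightarrow> finite A \<Longrightarrow> A \<notin> p"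
  unfolding free_ultrafilter_on_nat_def by blast
lemma free_cofin: "free_ultrafilter_on_nat p \<Longrightarrow> finite (- A) \<Longrightarrow> A \<in> p"
  unfolding free_ultrafilter_on_nat_def ultrafilter_on_nat_def by blast
lemma sel_free: "selective_ultrafilter p \<Longrightarrow> free_ultrafilter_on_nat p"
  unfolding selective_ultrafilter_def by blast
lemma sel_uf: "selective_ultrafilter p \<Longrightarrow> ultrafilter_on_nat p"
  using free_uf sel_free by blast

section \<open>Selectivity for functions\<close>

lemma sel_fun:
  fixes \<phi> :: "nat \<Rightarrow> nat"
  assumes s: "selective_ultrafilter p"
  shows "(\<exists>A\<in>p. \<exists>v. \<forall>x\<in>A. \<phi> x = v) \<or> (\<exists>B\<in>p. inj_on \<phi> B)"
proof (cases "finite (range \<phi>)")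
  case True
  have u: "ultrafilter_on_nat p" using s sel_uf by blast
  have "\<Union>((\<lambda>v. \<phi> -` {v}) ` range \<phi>) = UNIV" by auto
  hence "\<Union>((\<lambda>v. \<phi> -` {v}) ` range \<phi>) \<in> p" using uf_UNIV u by simp
  then obtain v where "\<phi> -` {v} \<in> p" using uf_finite_Un[OF u, of "(\<lambda>v. \<phi> -` {v}) ` range \<phi>"] True by blast
  thus ?thesis by (intro disjI1 bexI[of _ "\<phi> -` {v}"]) auto
next
  case False
  define en where "en = enumerate (range \<phi>)"
  define A where "A n = \<phi> -` {en n}" for n
  have enr: "en n \<in> range \<phi>" for n using False enumerate_in_set en_def by blast
  have eninj: "en m = en n \<Longrightarrow> m = n" for m n
    using False en_def enumerate_mono by (metis linorder_neqE_nat less_irrefl)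
  have part: "is_partition_nat A"
    unfolding is_partition_nat_def
  proof (intro conjI allI impI)
    fix n show "A n \<noteq> {}" using enr[of n] by (auto simp: A_def)
  next
    fix m n :: nat assume "m \<noteq> n" thus "A m \<inter> A n = {}" using eninj by (auto simp: A_def)
  next
    show "(\<Union>n. A n) = UNIV"
    proof (auto simp: A_def)
      fix x
      obtain n where "en n = \<phi> x" using enumerate_Ex[OF False, of "\<phi> x"] en_def by auto
      thus "\<exists>n. \<phi> x = en n" by metis
    qed
  qed
  from s part have "(\<exists>n. A n \<in> p) \<or> (\<exists>B\<in>p. \<forall>n. \<exists>!x. x \<in> B \<inter> A n)"
    unfolding selective_ultrafilter_def by blast
  thus ?thesis
  proof
    assume "\<exists>n. A n \<in> p"
    then obtain n where "A n \<in> p" by blast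
    thus ?thesis unfolding A_def by (intro disjI1 bexI[of _ "\<phi> -` {en n}"]) auto
  next
    assume "\<exists>B\<in>p. \<forall>n. \<exists>!x. x \<in> B \<inter> A n"
    then obtain B where B: "B \<in> p" "\<forall>n. \<exists>!x. x \<in> B \<inter> A n" by blast
    have "inj_on \<phi> B"
    proof (rule inj_onI)
      fix x y assume xy: "x \<in> B" "y \<in> B" "\<phi> x = \<phi> y"
      obtain n where "en n = \<phi> x" using enumerate_Ex[OF False, of "\<phi> x"] en_def by auto
      hence "x \<in> B \<inter> A n" "y \<in> B \<inter> A n" using xy by (auto simp: A_def)
      thus "x = y" using B(2) by blast
    qed
    thus ?thesis using B by blast
  qed
qed

lemma pseudo:
  fixes A :: "nat \<Rightarrow> nat set"
  assumes s: "selective_ultrafilter p" and A: "\<forall>n. A n \<in> p"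
  shows "\<exists>C\<in>p. \<forall>n. finite (C - A n)"
proof -
  have u: "ultrafilter_on_nat p" using s sel_uf by blast
  define A' where "A' n = (\<Inter>l\<le>n. A l)" for n
  have A'p: "A' n \<in> p" for n
  proof (induction n)
    case 0 thus ?case using A by (simp add: A'_def)
  next
    case (Suc n)
    have "A' (Suc n) = A' n \<inter> A (Suc n)" by (auto simp: A'_def le_Suc_eq)
    thus ?case using Suc uf_int[OF u] A by simp
  qed
  have A'A: "A' n \<subseteq> A n" for n by (auto simp: A'_def)
  have A'dec: "m \<le> n \<Longrightarrow> A' n \<subseteq> A' m" for m n by (auto simp: A'_def)
  show ?thesis
  proof (cases "(\<Inter>n. A' n) \<in> p")
    case True
    have e: "(\<Inter>n. A' n) - A n = {}" for n using A'A by blast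
    show ?thesis
    proof (rule bexI[OF _ True])
      show "\<forall>n. finite ((\<Inter>n. A' n) - A n)" by (intro allI) (subst e, simp)
    qed
  next
    case False
    define Z where "Z = - (\<Inter>n. A' n)"
    have Zp: "Z \<in> p" using False uf_compl u Z_def by blast
    define \<phi> where "\<phi> x = (LEAST n. x \<notin> A' n)" for x
    have phi1: "x \<in> Z \<Longrightarrow> x \<notin> A' (\<phi> x)" for x
      unfolding \<phi>_def Z_def by (rule LeastI_ex) auto
    have phi2: "x \<notin> A' n \<Longrightarrow> \<phi> x \<le> n" for x n
      unfolding \<phi>_def by (rule Least_le)
    from sel_fun[OF s, of \<phi>] show ?thesis
    proof
      assume "\<exists>A0\<in>p. \<exists>v. \<forall>x\<in>A0. \<phi> x = v"
      then obtain A0 v where A0: "A0 \<in> p" "\<forall>x\<in>A0. \<phi> x = v" by blast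
      have "A0 \<inter> Z \<inter> A' v = {}" using A0 phi1 by auto
      moreover have "A0 \<inter> Z \<inter> A' v \<in> p" using A0 Zp A'p uf_int[OF u] by blast
      ultimately show ?thesis using uf_empty u by simp
    next
      assume "\<exists>B\<in>p. inj_on \<phi> B"
      then obtain B where B: "B \<in> p" "inj_on \<phi> B" by blast
      have "finite (B \<inter> Z - A n)" for n
      proof -
        have sub: "B \<inter> Z - A n \<subseteq> {x \<in> B. \<phi> x \<le> n}" using A'A phi2 by blast
        have "inj_on \<phi> {x \<in> B. \<phi> x \<le> n}" using B(2) by (rule inj_on_subset) auto
        moreover have "\<phi> ` {x \<in> B. \<phi> x \<le> n} \<subseteq> {..n}" by auto
        ultimately have "finite {x \<in> B. \<phi> x \<le> n}"
          by (meson finite_atMost finite_imageD finite_subset)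
        thus ?thesis using sub finite_subset by blast
      qed
      moreover have "B \<inter> Z \<in> p" using B Zp uf_int[OF u] by blast
      ultimately show ?thesis by blast
    qed
  qed
qed

section \<open>Push-forwards\<close>

definition push :: "(nat \<Rightarrow> nat) \<Rightarrow> nat set set \<Rightarrow> nat set set" where
  "push f p = {A. f -` A \<in> p}"

lemma rk_le_push: "rk_le p q \<longleftrightarrow> (\<exists>f. p = push f q)"
  unfolding rk_le_def push_def by simp

lemma push_comp: "push f (push h p) = push (f \<circ> h) p"
  unfolding push_def by (simp add: vimage_comp)

lemma push_id: "push id p = p"
  unfolding push_def by simp

lemma uf_push: "ultrafilter_on_nat p \<Longrightarrow> ultrafilter_on_nat (push f p)"
proof -
  assume u: "ultrafilter_on_nat p"
  show ?thesis unfolding ultrafilter_on_nat_def push_def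
  proof (intro conjI allI impI)
    show "{} \<notin> {A. f -` A \<in> p}" using uf_empty[OF u] by simp
    show "UNIV \<in> {A. f -` A \<in> p}" using uf_UNIV[OF u] by simp
  next
    fix A B assume "A \<in> {A. f -` A \<in> p} \<and> A \<subseteq> B"
    thus "B \<in> {A. f -` A \<in> p}" using uf_up[OF u, of "f -` A" "f -` B"] by auto
  next
    fix A B assume "A \<in> {A. f -` A \<in> p} \<and> B \<in> {A. f -` A \<in> p}"
    thus "A \<inter> B \<in> {A. f -` A \<in> p}" using uf_int[OF u, of "f -` A" "f -` B"] by (simp add: vimage_Int)
  next
    fix A show "A \<in> {A. f -` A \<in> p} \<or> - A \<in> {A. f -` A \<in> p}"
      using uf_compl[OF u, of "f -` A"] by (auto simp: vimage_Compl)
  qed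
qed

lemma push_inv:
  assumes u: "ultrafilter_on_nat p" and S: "S \<in> p" and inj: "inj_on \<pi> S"
  shows "push (inv_into S \<pi>) (push \<pi> p) = p"
proof -
  have "A \<in> push (inv_into S \<pi>) (push \<pi> p) \<longleftrightarrow> A \<in> p" for A
  proof -
    have eq: "(inv_into S \<pi> \<circ> \<pi>) -` A \<inter> S = A \<inter> S" using inj by auto
    have "A \<in> push (inv_into S \<pi>) (push \<pi> p) \<longleftrightarrow> (inv_into S \<pi> \<circ> \<pi>) -` A \<in> p"
      by (simp add: push_def vimage_comp)
    also have "\<dots> \<longleftrightarrow> A \<in> p" using uf_same[OF u S eq] uf_same[OF u S eq[symmetric]] by blast
    finally show ?thesis .
  qed
  thus ?thesis by blast
qed

lemma uf_neq:
  assumes u: "ultrafilter_on_nat q" "ultrafilter_on_nat q'" and ne: "q \<noteq> q'"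
  shows "\<exists>D\<in>q. D \<notin> q'"
proof (rule ccontr)
  assume "\<not> ?thesis"
  hence sub: "q \<subseteq> q'" by blast
  obtain D where "D \<in> q' - q" using ne sub by blast
  hence "-D \<in> q" using uf_compl u(1) by blast
  hence "-D \<in> q'" using sub by blast
  thus False using \<open>D \<in> q' - q\<close> uf_compl2 u(2) by blast
qed




fun cc :: "(nat \<Rightarrow> nat) \<Rightarrow> nat \<Rightarrow> nat" where
  "cc H 0 = 0"
| "cc H (Suc n) = Max (H ` {..cc H n}) + cc H n + 1"

definition piv :: "(nat \<Rightarrow> nat) \<Rightarrow> nat \<Rightarrow> nat" where
  "piv H x = (LEAST n. x < cc H (Suc n))"

lemma cc_smono: "strict_mono (cc H)"
  by (rule strict_mono_Suc_iff[THEN iffD2]) simp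

lemma cc_ge: "n \<le> cc H n"
  by (induction n) auto

lemma piv_lt: "x < cc H (Suc (piv H x))"
proof -
  have "x < cc H (Suc x)" using cc_ge[of "Suc x" H] by simp
  thus ?thesis unfolding piv_def by (rule LeastI)
qed

lemma piv_le: "x < cc H (Suc n) \<Longrightarrow> piv H x \<le> n"
  unfolding piv_def by (rule Least_le)

lemma piv_ge: "cc H (piv H x) \<le> x"
proof (cases "piv H x")
  case 0 thus ?thesis by simp
next
  case (Suc m)
  hence "m < piv H x" by simp
  hence "\<not> x < cc H (Suc m)" unfolding piv_def by (rule not_less_Least)
  thus ?thesis using Suc by simp
qed

lemma piv_mono: "x \<le> x' \<Longrightarrow> piv H x \<le> piv H x'"
  using piv_lt[of x' H] by (intro piv_le) simp

lemma piv_fin: "finite D \<Longrightarrow> finite (piv H -` D)"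
proof -
  assume "finite D"
  then obtain M where M: "D \<subseteq> {..M}" using finite_nat_iff_bounded_le by auto
  have "piv H -` D \<subseteq> {..<cc H (Suc M)}"
  proof
    fix x assume "x \<in> piv H -` D"
    hence "piv H x \<le> M" using M by auto
    hence "cc H (Suc (piv H x)) \<le> cc H (Suc M)" by (metis Suc_le_mono cc_smono strict_mono_less_eq)
    thus "x \<in> {..<cc H (Suc M)}" using piv_lt[of x H] by simp
  qed
  thus ?thesis using finite_subset by blast
qed

lemma piv_sparse:
  assumes "piv H a + 2 \<le> piv H a'"
  shows "H a < a'"
proof -
  let ?n = "piv H a"
  have "cc H (?n + 2) \<le> cc H (piv H a')" using assms by (metis cc_smono strict_mono_less_eq)
  hence 1: "cc H (?n + 2) \<le> a'" using piv_ge[of H a'] by simp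
  have "a \<le> cc H (Suc ?n)" using piv_lt[of a H] by simp
  hence "H a \<le> Max (H ` {..cc H (Suc ?n)})" by (intro Max_ge) auto
  moreover have "cc H (?n + 2) = Max (H ` {..cc H (Suc ?n)}) + cc H (Suc ?n) + 1"
    by (simp add: numeral_2_eq_2)
  ultimately show ?thesis using 1 by linarith
qed

definition Nb :: "nat set \<Rightarrow> nat set" where
  "Nb D = D \<union> Suc -` D \<union> Suc ` D"

definition WW :: "(nat \<Rightarrow> nat) \<Rightarrow> nat set \<Rightarrow> nat set" where
  "WW H C = piv H -` Nb (piv H ` C)"

lemma WW_mono: "C \<subseteq> C' \<Longrightarrow> WW H C \<subseteq> WW H C'"
  unfolding WW_def Nb_def by auto

lemma WW_Un: "WW H (C \<union> C') = WW H C \<union> WW H C'"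
  unfolding WW_def Nb_def by auto

lemma WW_fin: "finite C \<Longrightarrow> finite (WW H C)"
  unfolding WW_def Nb_def
  by (intro piv_fin) (auto intro: finite_vimageI)

lemma WW_sep:
  assumes "a' \<in> C" "a \<notin> WW H C"
  shows "piv H a + 2 \<le> piv H a' \<or> piv H a' + 2 \<le> piv H a"
proof -
  have "piv H a \<noteq> piv H a'" "Suc (piv H a) \<noteq> piv H a'" "piv H a \<noteq> Suc (piv H a')"
    using assms unfolding WW_def Nb_def by (auto simp: image_iff)
  thus ?thesis by linarith
qed

lemma rk_sep:
  assumes u: "selective_ultrafilter u" and v: "selective_ultrafilter v"
    and inc: "rk_incomparable u v"
  shows "\<exists>A\<in>u. WW H A \<notin> v"
proof (rule ccontr)
  assume "\<not> ?thesis"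
  hence all: "\<And>A. A \<in> u \<Longrightarrow> WW H A \<in> v" by blast
  let ?\<pi> = "piv H"
  have uu: "ultrafilter_on_nat u" and vv: "ultrafilter_on_nat v" using u v sel_uf by blast+
  have fu: "free_ultrafilter_on_nat u" using u sel_free by blast
  define q1 where "q1 = push ?\<pi> u"
  define q2 where "q2 = push ?\<pi> v"
  have q1u: "ultrafilter_on_nat q1" "ultrafilter_on_nat (push Suc q1)"
    using uf_push uu q1_def by blast+
  have q2u: "ultrafilter_on_nat q2" "ultrafilter_on_nat (push Suc q2)"
    using uf_push vv q2_def by blast+
  have cases: "q1 = q2 \<or> push Suc q1 = q2 \<or> q1 = push Suc q2"
  proof (rule ccontr)
    assume "\<not> ?thesis"
    hence ne: "q1 \<noteq> q2" "push Suc q1 \<noteq> q2" "q1 \<noteq> push Suc q2" by auto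
    obtain D1 where D1: "D1 \<in> q1" "D1 \<notin> q2" using uf_neq[OF q1u(1) q2u(1) ne(1)] by blast
    obtain D where D: "D \<in> push Suc q1" "D \<notin> q2" using uf_neq[OF q1u(2) q2u(1) ne(2)] by blast
    obtain D3 where D3: "D3 \<in> q1" "D3 \<notin> push Suc q2" using uf_neq[OF q1u(1) q2u(2) ne(3)] by blast
    define Dall where "Dall = D1 \<inter> Suc -` D \<inter> D3"
    have "Dall \<in> q1" using D1 D D3 uf_int[OF q1u(1)] unfolding Dall_def push_def by simp
    hence Ap: "?\<pi> -` Dall \<in> u" unfolding q1_def push_def by simp
    have "WW H (?\<pi> -` Dall) \<subseteq> ?\<pi> -` D1 \<union> ?\<pi> -` (Suc -` D3) \<union> ?\<pi> -` D"
      unfolding WW_def Nb_def Dall_def by auto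
    hence "?\<pi> -` D1 \<union> ?\<pi> -` (Suc -` D3) \<union> ?\<pi> -` D \<in> v" using all[OF Ap] uf_up[OF vv] by blast
    hence "?\<pi> -` D1 \<in> v \<or> ?\<pi> -` (Suc -` D3) \<in> v \<or> ?\<pi> -` D \<in> v" using uf_Un[OF vv] by blast
    thus False using D1 D D3 unfolding q2_def push_def by (auto simp: vimage_comp)
  qed
  obtain S where S: "S \<in> u" "inj_on ?\<pi> S"
  proof -
    from sel_fun[OF u, of ?\<pi>] show ?thesis
    proof
      assume "\<exists>A\<in>u. \<exists>v. \<forall>x\<in>A. ?\<pi> x = v"
      then obtain A w where A: "A \<in> u" "\<forall>x\<in>A. ?\<pi> x = w" by blast
      hence "A \<subseteq> ?\<pi> -` {w}" by auto
      moreover have "finite (?\<pi> -` {w})" by (rule piv_fin) simp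
      ultimately have "finite A" using finite_subset by blast
      thus ?thesis using free_fin[OF fu] A by blast
    next
      assume "\<exists>B\<in>u. inj_on ?\<pi> B" thus ?thesis using that by blast
    qed
  qed
  define f where "f = inv_into S ?\<pi>"
  have uq: "u = push f q1" using push_inv[OF uu S] f_def q1_def by simp
  have "rk_le u v"
    unfolding rk_le_push
  proof -
    from cases show "\<exists>f. u = push f v"
    proof (elim disjE)
      assume "q1 = q2"
      hence "u = push (f \<circ> ?\<pi>) v" using uq q2_def push_comp by metis
      thus ?thesis by blast
    next
      assume h: "push Suc q1 = q2"
      have "push (\<lambda>n. n - 1) (push Suc q1) = q1"
        by (simp add: push_comp comp_def push_id[unfolded id_def])
      hence "q1 = push (\<lambda>n. n - 1) (push ?\<pi> v)" using h q2_def by simp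
      hence "u = push (f \<circ> (\<lambda>n. n - 1) \<circ> ?\<pi>) v" using uq push_comp by metis
      thus ?thesis by blast
    next
      assume h: "q1 = push Suc q2"
      hence "u = push (f \<circ> Suc \<circ> ?\<pi>) v" using uq push_comp q2_def by metis
      thus ?thesis by blast
    qed
  qed
  thus False using inc unfolding rk_incomparable_def by blast
qed




lemma inj_set:
  assumes u: "selective_ultrafilter u"
  shows "\<exists>S\<in>u. inj_on (piv H) S"
proof -
  have fu: "free_ultrafilter_on_nat u" using u sel_free by blast
  from sel_fun[OF u, of "piv H"] show ?thesis
  proof
    assume "\<exists>A\<in>u. \<exists>v. \<forall>x\<in>A. piv H x = v"
    then obtain A w where A: "A \<in> u" "\<forall>x\<in>A. piv H x = w" by blast
    hence "A \<subseteq> piv H -` {w}" by auto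
    moreover have "finite (piv H -` {w})" by (rule piv_fin) simp
    ultimately have "finite A" using finite_subset by blast
    thus ?thesis using free_fin[OF fu] A by blast
  qed
qed

lemma par_sep: fixes x y :: nat assumes "x \<noteq> y" "even x = even y" shows "x + 2 \<le> y \<or> y + 2 \<le> x"
proof -
  have "y \<noteq> Suc x" "x \<noteq> Suc y" using assms(2) by auto
  thus ?thesis using assms(1) by linarith
qed

lemma UF_main:
  fixes I :: "'a set" and p :: "'a \<Rightarrow> nat set set" and c :: "'a \<Rightarrow> nat" and H :: "nat \<Rightarrow> nat"
  assumes cI: "countable I" and sel: "\<forall>\<xi>\<in>I. selective_ultrafilter (p \<xi>)"
    and rk: "\<forall>\<xi>\<in>I. \<forall>\<eta>\<in>I. \<xi> \<noteq> \<eta> \<longrightarrow> rk_incomparable (p \<xi>) (p \<eta>)"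
  shows "\<exists>B. (\<forall>\<xi>\<in>I. B \<xi> \<in> p \<xi> \<and> (\<forall>a\<in>B \<xi>. c \<xi> < a)) \<and>
             (\<forall>\<xi>\<in>I. \<forall>\<eta>\<in>I. \<forall>a\<in>B \<xi>. \<forall>a'\<in>B \<eta>. a < a' \<longrightarrow> H a < a') \<and>
             (\<forall>\<xi>\<in>I. \<forall>\<eta>\<in>I. \<xi> \<noteq> \<eta> \<longrightarrow> B \<xi> \<inter> B \<eta> = {})"
proof -
  let ?\<pi> = "piv H"
  have uf: "\<And>\<xi>. \<xi> \<in> I \<Longrightarrow> ultrafilter_on_nat (p \<xi>)" using sel sel_uf by blast
  have fr: "\<And>\<xi>. \<xi> \<in> I \<Longrightarrow> free_ultrafilter_on_nat (p \<xi>)" using sel sel_free by blast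
  have "\<forall>\<xi>\<in>I. \<exists>S\<in>p \<xi>. inj_on ?\<pi> S" using inj_set sel by blast
  then obtain S where S: "\<And>\<xi>. \<xi> \<in> I \<Longrightarrow> S \<xi> \<in> p \<xi> \<and> inj_on ?\<pi> (S \<xi>)" by metis
  define Q where "Q \<xi> = (if ?\<pi> -` {n. even n} \<in> p \<xi> then ?\<pi> -` {n. even n} else ?\<pi> -` {n. odd n})" for \<xi>
  have Qp: "Q \<xi> \<in> p \<xi>" if "\<xi> \<in> I" for \<xi>
  proof (cases "?\<pi> -` {n. even n} \<in> p \<xi>")
    case True thus ?thesis by (simp add: Q_def)
  next
    case False
    hence "- (?\<pi> -` {n. even n}) \<in> p \<xi>" using uf_compl uf that by blast
    moreover have "- (?\<pi> -` {n. even n}) = ?\<pi> -` {n. odd n}" by auto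
    ultimately show ?thesis using False by (simp add: Q_def)
  qed
  have Qpar: "a \<in> Q \<xi> \<Longrightarrow> a' \<in> Q \<xi> \<Longrightarrow> even (?\<pi> a) = even (?\<pi> a')" for a a' \<xi>
    by (cases "?\<pi> -` {n. even n} \<in> p \<xi>") (auto simp: Q_def)
  define Asep where "Asep \<xi> \<eta> = (SOME A. A \<in> p \<xi> \<and> WW H A \<notin> p \<eta>)" for \<xi> \<eta>
  have Asep: "Asep \<xi> \<eta> \<in> p \<xi> \<and> WW H (Asep \<xi> \<eta>) \<notin> p \<eta>" if "\<xi> \<in> I" "\<eta> \<in> I" "\<xi> \<noteq> \<eta>" for \<xi> \<eta>
  proof -
    have "\<exists>A\<in>p \<xi>. WW H A \<notin> p \<eta>" using rk_sep sel rk that by blast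
    thus ?thesis unfolding Asep_def by (rule someI2_bex) blast
  qed
  have Cex: "\<exists>C\<in>p \<xi>. \<forall>\<eta>\<in>I. \<eta> \<noteq> \<xi> \<longrightarrow> WW H C \<notin> p \<eta>" if \<xi>: "\<xi> \<in> I" for \<xi>
  proof -
    have Ine: "I \<noteq> {}" using \<xi> by blast
    define An where "An n = (if from_nat_into I n \<noteq> \<xi> then Asep \<xi> (from_nat_into I n) else UNIV)" for n
    have "\<forall>n. An n \<in> p \<xi>" using Asep[OF \<xi>] from_nat_into[OF Ine] uf_UNIV[OF uf[OF \<xi>]]
      unfolding An_def by auto
    then obtain C where C: "C \<in> p \<xi>" "\<forall>n. finite (C - An n)" using pseudo sel \<xi> by blast
    have "WW H C \<notin> p \<eta>" if \<eta>: "\<eta> \<in> I" "\<eta> \<noteq> \<xi>" for \<eta>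
    proof
      assume W: "WW H C \<in> p \<eta>"
      obtain n where n: "from_nat_into I n = \<eta>" using from_nat_into_surj[OF cI \<eta>(1)] by blast
      have fin: "finite (C - Asep \<xi> \<eta>)" using C(2)[rule_format, of n] n \<eta> by (simp add: An_def)
      have "C \<subseteq> Asep \<xi> \<eta> \<union> (C - Asep \<xi> \<eta>)" by blast
      hence "WW H C \<subseteq> WW H (Asep \<xi> \<eta>) \<union> WW H (C - Asep \<xi> \<eta>)" using WW_mono WW_Un by metis
      hence "WW H (Asep \<xi> \<eta>) \<union> WW H (C - Asep \<xi> \<eta>) \<in> p \<eta>" using W uf_up uf \<eta>(1) by blast
      hence "WW H (Asep \<xi> \<eta>) \<in> p \<eta> \<or> WW H (C - Asep \<xi> \<eta>) \<in> p \<eta>" using uf_Un uf \<eta>(1) by blast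
      thus False using Asep[OF \<xi> \<eta>(1)] \<eta>(2) free_fin[OF fr[OF \<eta>(1)] WW_fin[OF fin]] by auto
    qed
    thus ?thesis using C by blast
  qed
  define Cf where "Cf \<xi> = (SOME C. C \<in> p \<xi> \<and> (\<forall>\<eta>\<in>I. \<eta> \<noteq> \<xi> \<longrightarrow> WW H C \<notin> p \<eta>))" for \<xi>
  have Cf: "Cf \<xi> \<in> p \<xi> \<and> (\<forall>\<eta>\<in>I. \<eta> \<noteq> \<xi> \<longrightarrow> WW H (Cf \<xi>) \<notin> p \<eta>)" if "\<xi> \<in> I" for \<xi>
    unfolding Cf_def using Cex[OF that] by (rule someI2_bex) blast
  define idx where "idx = to_nat_on I"
  have idxinj: "inj_on idx I" using cI idx_def by auto
  define P where "P \<xi> = {\<eta> \<in> I. idx \<eta> < idx \<xi>}" for \<xi>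
  have Pfin: "finite (P \<xi>)" for \<xi>
  proof -
    have "inj_on idx (P \<xi>)" using idxinj by (rule inj_on_subset) (auto simp: P_def)
    moreover have "idx ` P \<xi> \<subseteq> {..<idx \<xi>}" by (auto simp: P_def)
    ultimately show ?thesis by (meson finite_imageD finite_lessThan finite_subset)
  qed
  define B where "B \<xi> = (Cf \<xi> \<inter> S \<xi> \<inter> Q \<xi> \<inter> {c \<xi><..}) - \<Union> (WW H ` Cf ` P \<xi>)" for \<xi>
  have Bp: "B \<xi> \<in> p \<xi>" if \<xi>: "\<xi> \<in> I" for \<xi>
  proof -
    have u: "ultrafilter_on_nat (p \<xi>)" using uf \<xi> by blast
    have "\<Union> (WW H ` Cf ` P \<xi>) \<notin> p \<xi>"
    proof (rule uf_finite_Un[OF u])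
      show "finite (WW H ` Cf ` P \<xi>)" using Pfin by simp
      show "\<forall>A\<in>WW H ` Cf ` P \<xi>. A \<notin> p \<xi>"
      proof
        fix A assume "A \<in> WW H ` Cf ` P \<xi>"
        then obtain \<eta> where \<eta>: "\<eta> \<in> I" "idx \<eta> < idx \<xi>" "A = WW H (Cf \<eta>)" by (auto simp: P_def)
        hence "\<eta> \<noteq> \<xi>" by auto
        thus "A \<notin> p \<xi>" using Cf[OF \<eta>(1)] \<xi> \<eta>(3) by auto
      qed
    qed
    hence 1: "- \<Union> (WW H ` Cf ` P \<xi>) \<in> p \<xi>" using uf_compl u by blast
    have 2: "{c \<xi><..} \<in> p \<xi>" using free_cofin[OF fr[OF \<xi>]] by (simp add: Compl_greaterThan)
    have "Cf \<xi> \<inter> S \<xi> \<inter> Q \<xi> \<inter> {c \<xi><..} \<inter> - \<Union> (WW H ` Cf ` P \<xi>) \<in> p \<xi>"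
      using Cf[OF \<xi>] S[OF \<xi>] Qp[OF \<xi>] 1 2 uf_int[OF u] by simp
    thus ?thesis by (simp add: B_def Diff_eq Int_assoc)
  qed
  have key: "?\<pi> a + 2 \<le> ?\<pi> a' \<or> ?\<pi> a' + 2 \<le> ?\<pi> a"
    if \<xi>: "\<xi> \<in> I" "\<eta> \<in> I" "a \<in> B \<xi>" "a' \<in> B \<eta>" "\<xi> \<noteq> \<eta> \<or> a \<noteq> a'" for \<xi> \<eta> a a'
  proof (cases "\<xi> = \<eta>")
    case True
    hence "a \<noteq> a'" using \<xi> by blast
    moreover have "a \<in> S \<xi>" "a' \<in> S \<xi>" "a \<in> Q \<xi>" "a' \<in> Q \<xi>" using \<xi> True by (auto simp: B_def)
    ultimately have "?\<pi> a \<noteq> ?\<pi> a'" "even (?\<pi> a) = even (?\<pi> a')"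
      using S[OF \<xi>(1)] Qpar[of a \<xi> a'] unfolding inj_on_def by blast+
    thus ?thesis by (rule par_sep)
  next
    case False
    hence "idx \<xi> \<noteq> idx \<eta>" using idxinj \<xi> by (auto simp: inj_on_def)
    hence "idx \<eta> < idx \<xi> \<or> idx \<xi> < idx \<eta>" by linarith
    thus ?thesis
    proof
      assume "idx \<eta> < idx \<xi>"
      hence "\<eta> \<in> P \<xi>" using \<xi> by (simp add: P_def)
      hence "a \<notin> WW H (Cf \<eta>)" using \<xi>(3) by (auto simp: B_def)
      moreover have "a' \<in> Cf \<eta>" using \<xi>(4) by (simp add: B_def)
      ultimately show ?thesis using WW_sep by blast
    next
      assume "idx \<xi> < idx \<eta>"
      hence "\<xi> \<in> P \<eta>" using \<xi> by (simp add: P_def)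
      hence "a' \<notin> WW H (Cf \<xi>)" using \<xi>(4) by (auto simp: B_def)
      moreover have "a \<in> Cf \<xi>" using \<xi>(3) by (simp add: B_def)
      ultimately show ?thesis using WW_sep by blast
    qed
  qed
  have sparse: "H a < a'" if "\<xi> \<in> I" "\<eta> \<in> I" "a \<in> B \<xi>" "a' \<in> B \<eta>" "a < a'" for \<xi> \<eta> a a'
  proof -
    have "?\<pi> a \<le> ?\<pi> a'" using piv_mono that by simp
    moreover have "?\<pi> a + 2 \<le> ?\<pi> a' \<or> ?\<pi> a' + 2 \<le> ?\<pi> a" using key that by blast
    ultimately have "?\<pi> a + 2 \<le> ?\<pi> a'" by linarith
    thus ?thesis by (rule piv_sparse)
  qed
  have disj: "B \<xi> \<inter> B \<eta> = {}" if "\<xi> \<in> I" "\<eta> \<in> I" "\<xi> \<noteq> \<eta>" for \<xi> \<eta>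
  proof (rule ccontr)
    assume "B \<xi> \<inter> B \<eta> \<noteq> {}"
    then obtain a where "a \<in> B \<xi>" "a \<in> B \<eta>" by blast
    hence "?\<pi> a + 2 \<le> ?\<pi> a \<or> ?\<pi> a + 2 \<le> ?\<pi> a" using key[OF that(1,2), of a a] that(3) by blast
    thus False by linarith
  qed
  have "\<forall>\<xi>\<in>I. B \<xi> \<in> p \<xi> \<and> (\<forall>a\<in>B \<xi>. c \<xi> < a)" using Bp by (auto simp: B_def)
  thus ?thesis using sparse disj by blast
qed




locale mt =
  fixes E I F :: "'a set" and k :: "'a \<Rightarrow> nat" and g :: "'a \<Rightarrow> nat \<Rightarrow> nat \<Rightarrow> 'a set"
    and d :: "'a \<Rightarrow> nat \<Rightarrow> 'a set" and y :: "nat \<Rightarrow> 'a" and e :: "nat \<Rightarrow> 'a"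
  assumes cI: "countable I" and IE: "I \<subseteq> E" and FE: "F \<subseteq> E" and fF: "finite F"
    and gfin: "\<forall>\<xi>\<in>I. \<forall>m. \<forall>j<k \<xi>. finite (g \<xi> m j) \<and> g \<xi> m j \<subseteq> E"
    and dfin: "\<forall>\<xi>\<in>I. \<forall>j<k \<xi>. finite (d \<xi> j) \<and> d \<xi> j \<subseteq> E"
    and iy: "inj y" and yE: "range y \<subseteq> E" and eE: "range e \<subseteq> E"
begin

definition Kf :: "'a set \<Rightarrow> nat" where "Kf S = (LEAST K. \<forall>n. y n \<in> S \<longrightarrow> n < 2 * K)"
definition clo :: "'a set \<Rightarrow> 'a set" where "clo S = S \<union> y ` {..<2 * Kf S}"
definition RR :: "nat \<Rightarrow> 'a set" where "RR N = {\<xi> \<in> I. to_nat_on I \<xi> \<le> N}"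
definition DD :: "'a \<Rightarrow> 'a set" where "DD \<xi> = (\<Union>j<k \<xi>. d \<xi> j)"
definition GG :: "nat \<Rightarrow> 'a set \<Rightarrow> 'a set" where
  "GG N S = (\<Union>\<xi>\<in>S \<inter> I. \<Union>n\<le>N. \<Union>j<k \<xi>. g \<xi> n j)"

primrec Wst :: "nat \<Rightarrow> nat \<Rightarrow> 'a set" where
  "Wst N 0 = clo (F \<union> RR N \<union> (\<Union>\<xi>\<in>RR N. DD \<xi>) \<union> {e 0})"
| "Wst N (Suc m) = clo (Wst N m \<union> GG N (Wst N m) \<union> RR N \<union> (\<Union>\<xi>\<in>RR N. DD \<xi>) \<union> {e (Suc m)}
      \<union> y ` {..2 * Kf (Wst N m)})"

lemma Kf_ex: "finite S \<Longrightarrow> \<exists>K. \<forall>n. y n \<in> S \<longrightarrow> n < 2 * K"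
proof -
  assume "finite S"
  hence "finite (y -` S)" using iy by (intro finite_vimageI) auto
  then obtain K where K: "\<forall>n\<in>y -` S. n < K" using finite_nat_set_iff_bounded by blast
  have "\<forall>n. y n \<in> S \<longrightarrow> n < 2 * K"
  proof (intro allI impI)
    fix n assume "y n \<in> S" hence "n < K" using K by simp
    thus "n < 2 * K" by simp
  qed
  thus ?thesis by blast
qed

lemma Kf_prop0: "finite S \<Longrightarrow> \<forall>n. y n \<in> S \<longrightarrow> n < 2 * Kf S"
  unfolding Kf_def by (rule LeastI_ex[OF Kf_ex])

lemma Kf_prop: "finite S \<Longrightarrow> y n \<in> S \<Longrightarrow> n < 2 * Kf S"
  using Kf_prop0 by blast

lemma Kf_mono: "S \<subseteq> S' \<Longrightarrow> finite S' \<Longrightarrow> Kf S \<le> Kf S'"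
proof -
  assume a: "S \<subseteq> S'" "finite S'"
  have "\<forall>n. y n \<in> S \<longrightarrow> n < 2 * Kf S'" using Kf_prop0[OF a(2)] a(1) by blast
  thus ?thesis unfolding Kf_def[of S] by (rule Least_le)
qed

lemma clo_seg: "finite S \<Longrightarrow> {n. y n \<in> clo S} = {..<2 * Kf S}"
proof -
  assume f: "finite S"
  show ?thesis
  proof (intro set_eqI iffI)
    fix n assume "n \<in> {n. y n \<in> clo S}"
    hence "y n \<in> S \<or> y n \<in> y ` {..<2 * Kf S}" unfolding clo_def by blast
    thus "n \<in> {..<2 * Kf S}"
    proof
      assume "y n \<in> S" thus ?thesis using Kf_prop[OF f] by blast
    next
      assume "y n \<in> y ` {..<2 * Kf S}"
      then obtain m where "m \<in> {..<2 * Kf S}" "y n = y m" by blast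
      thus ?thesis using iy by (metis injD)
    qed
  next
    fix n assume "n \<in> {..<2 * Kf S}"
    thus "n \<in> {n. y n \<in> clo S}" unfolding clo_def by blast
  qed
qed

lemma clo_fin: "finite S \<Longrightarrow> finite (clo S)"
  unfolding clo_def by simp

lemma clo_sup: "S \<subseteq> clo S"
  unfolding clo_def by simp

lemma clo_E: "S \<subseteq> E \<Longrightarrow> clo S \<subseteq> E"
  unfolding clo_def using yE by blast

lemma clo_mono: "S \<subseteq> S' \<Longrightarrow> finite S' \<Longrightarrow> clo S \<subseteq> clo S'"
proof -
  assume a: "S \<subseteq> S'" "finite S'"
  hence "Kf S \<le> Kf S'" by (rule Kf_mono)
  hence "y ` {..<2 * Kf S} \<subseteq> y ` {..<2 * Kf S'}" by (intro image_mono) simp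
  thus ?thesis unfolding clo_def using a by blast
qed

lemma Kf_clo: "finite S \<Longrightarrow> Kf (clo S) = Kf S"
proof -
  assume fS: "finite S"
  have seg: "{n. y n \<in> clo S} = {..<2 * Kf S}" using clo_seg[OF fS] .
  show ?thesis unfolding Kf_def[of "clo S"]
  proof (rule Least_equality)
    show "\<forall>n. y n \<in> clo S \<longrightarrow> n < 2 * Kf S"
    proof (intro allI impI)
      fix n assume "y n \<in> clo S" hence "n \<in> {n. y n \<in> clo S}" by simp
      thus "n < 2 * Kf S" using seg by simp
    qed
  next
    fix K assume K: "\<forall>n. y n \<in> clo S \<longrightarrow> n < 2 * K"
    show "Kf S \<le> K"
    proof (rule ccontr)
      assume "\<not> Kf S \<le> K"
      hence "2 * K < 2 * Kf S" by simp
      hence "2 * K \<in> {..<2 * Kf S}" by simp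
      hence "2 * K \<in> {n. y n \<in> clo S}" using seg by simp
      hence "y (2 * K) \<in> clo S" by simp
      hence "2 * K < 2 * K" using K by blast
      thus False by simp
    qed
  qed
qed

lemma RR_fin: "finite (RR N)"
proof -
  have "inj_on (to_nat_on I) (RR N)" using cI by (rule inj_on_subset[OF inj_on_to_nat_on]) (auto simp: RR_def)
  moreover have "to_nat_on I ` RR N \<subseteq> {..N}" by (auto simp: RR_def)
  ultimately show ?thesis by (meson finite_atMost finite_imageD finite_subset)
qed

lemma RR_I: "RR N \<subseteq> I" by (auto simp: RR_def)
lemma RR_E: "RR N \<subseteq> E" using RR_I IE by blast

lemma RR_mono: "N \<le> N' \<Longrightarrow> RR N \<subseteq> RR N'" by (auto simp: RR_def)

lemma DD_fin: "\<xi> \<in> I \<Longrightarrow> finite (DD \<xi>) \<and> DD \<xi> \<subseteq> E"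
proof -
  assume "\<xi> \<in> I"
  hence h: "\<forall>j<k \<xi>. finite (d \<xi> j) \<and> d \<xi> j \<subseteq> E" using dfin by blast
  have "finite (DD \<xi>)" unfolding DD_def using h by simp
  moreover have "DD \<xi> \<subseteq> E" unfolding DD_def using h by blast
  ultimately show ?thesis by blast
qed

lemma GG_fin: "finite S \<Longrightarrow> finite (GG N S) \<and> GG N S \<subseteq> E"
proof -
  assume f: "finite S"
  have h: "\<And>\<xi> n j. \<xi> \<in> I \<Longrightarrow> j < k \<xi> \<Longrightarrow> finite (g \<xi> n j) \<and> g \<xi> n j \<subseteq> E" using gfin by blast
  have "finite (GG N S)" unfolding GG_def using f h by simp
  moreover have "GG N S \<subseteq> E" unfolding GG_def using h by blast
  ultimately show ?thesis by blast
qed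

lemma GG_mono: "N \<le> N' \<Longrightarrow> S \<subseteq> S' \<Longrightarrow> GG N S \<subseteq> GG N' S'"
proof
  fix x assume a: "N \<le> N'" "S \<subseteq> S'" and "x \<in> GG N S"
  then obtain \<xi> n j where "\<xi> \<in> S \<inter> I" "n \<le> N" "j < k \<xi>" "x \<in> g \<xi> n j" unfolding GG_def by blast
  moreover have "n \<le> N'" using a \<open>n \<le> N\<close> by simp
  ultimately show "x \<in> GG N' S'" unfolding GG_def using a by blast
qed

lemma RRD_fin: "finite (\<Union>\<xi>\<in>RR N. DD \<xi>)"
  using RR_fin RR_I DD_fin by blast
lemma RRD_E: "(\<Union>\<xi>\<in>RR N. DD \<xi>) \<subseteq> E"
  using RR_I DD_fin by blast
lemma RRD_mono: "N \<le> N' \<Longrightarrow> (\<Union>\<xi>\<in>RR N. DD \<xi>) \<subseteq> (\<Union>\<xi>\<in>RR N'. DD \<xi>)"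
  using RR_mono by blast

definition A0 :: "nat \<Rightarrow> 'a set" where "A0 N = F \<union> RR N \<union> (\<Union>\<xi>\<in>RR N. DD \<xi>) \<union> {e 0}"
definition AS :: "nat \<Rightarrow> nat \<Rightarrow> 'a set" where
  "AS N m = Wst N m \<union> GG N (Wst N m) \<union> RR N \<union> (\<Union>\<xi>\<in>RR N. DD \<xi>) \<union> {e (Suc m)}
      \<union> y ` {..2 * Kf (Wst N m)}"

lemma W0: "Wst N 0 = clo (A0 N)" by (simp add: A0_def)
lemma WS: "Wst N (Suc m) = clo (AS N m)" by (simp add: AS_def)

lemma A0_fin: "finite (A0 N)" unfolding A0_def using fF RR_fin RRD_fin by blast
lemma A0_E: "A0 N \<subseteq> E" unfolding A0_def using FE RR_E RRD_E eE by blast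

lemma W_fin: "finite (Wst N m) \<and> Wst N m \<subseteq> E"
proof (induction m)
  case 0
  show ?case unfolding W0 using A0_fin A0_E clo_fin clo_E by blast
next
  case (Suc m)
  have f: "finite (AS N m)" unfolding AS_def using Suc GG_fin[of "Wst N m" N] RR_fin RRD_fin by blast
  have E': "AS N m \<subseteq> E" unfolding AS_def using Suc GG_fin[of "Wst N m" N] RR_E RRD_E eE yE by blast
  show ?case unfolding WS using f E' clo_fin clo_E by blast
qed

lemma AS_fin: "finite (AS N m)" unfolding AS_def using W_fin GG_fin RR_fin RRD_fin by blast

lemma W_Suc: "Wst N m \<subseteq> Wst N (Suc m)"
  unfolding WS by (rule subset_trans[OF _ clo_sup]) (auto simp: AS_def)

lemma W_mono_m: "m \<le> m' \<Longrightarrow> Wst N m \<subseteq> Wst N m'"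
  using W_Suc by (rule lift_Suc_mono_le)

lemma W_mono_N: "N \<le> N' \<Longrightarrow> Wst N m \<subseteq> Wst N' m"
proof (induction m)
  case 0
  have "A0 N \<subseteq> A0 N'" unfolding A0_def using RR_mono[OF 0] RRD_mono[OF 0] by blast
  thus ?case unfolding W0 using clo_mono A0_fin by blast
next
  case (Suc m)
  have K: "Kf (Wst N m) \<le> Kf (Wst N' m)" using Suc W_fin by (intro Kf_mono) auto
  have G: "GG N (Wst N m) \<subseteq> GG N' (Wst N' m)" using Suc by (intro GG_mono) auto
  have Y: "y ` {..2 * Kf (Wst N m)} \<subseteq> y ` {..2 * Kf (Wst N' m)}" using K by auto
  have "AS N m \<subseteq> AS N' m" unfolding AS_def using Suc G Y RR_mono[OF Suc.prems] RRD_mono[OF Suc.prems] by blast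
  thus ?case unfolding WS using clo_mono AS_fin by blast
qed

lemma W_RR: "RR N \<subseteq> Wst N m"
  by (cases m) (simp_all only: W0 WS; rule subset_trans[OF _ clo_sup]; auto simp: A0_def AS_def)+

lemma W_DD: "\<xi> \<in> RR N \<Longrightarrow> DD \<xi> \<subseteq> Wst N m"
  by (cases m) (simp_all only: W0 WS; rule subset_trans[OF _ clo_sup]; auto simp: A0_def AS_def)+

lemma W_F: "F \<subseteq> Wst N 0"
  unfolding W0 by (rule subset_trans[OF _ clo_sup]) (auto simp: A0_def)

lemma W_e: "e m \<in> Wst N m"
  by (cases m) (simp_all only: W0 WS; rule clo_sup[THEN subsetD]; auto simp: A0_def AS_def)+

lemma W_GG: "GG N (Wst N m) \<subseteq> Wst N (Suc m)"
  unfolding WS by (rule subset_trans[OF _ clo_sup]) (auto simp: AS_def)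

lemma W_seg: "{n. y n \<in> Wst N m} = {..<2 * Kf (Wst N m)}"
proof (cases m)
  case 0
  show ?thesis unfolding 0 W0 Kf_clo[OF A0_fin] by (rule clo_seg[OF A0_fin])
next
  case (Suc m')
  have eq: "Wst N m = clo (AS N m')" using Suc WS by simp
  have "{n. y n \<in> clo (AS N m')} = {..<2 * Kf (clo (AS N m'))}"
    using clo_seg[OF AS_fin, of N m'] Kf_clo[OF AS_fin, of N m'] by simp
  thus ?thesis using eq by simp
qed

lemma W_strict: "Kf (Wst N m) < Kf (Wst N (Suc m))"
proof -
  have "y (2 * Kf (Wst N m)) \<in> Wst N (Suc m)"
    unfolding WS by (rule clo_sup[THEN subsetD]) (auto simp: AS_def)
  hence "2 * Kf (Wst N m) \<in> {..<2 * Kf (Wst N (Suc m))}" using W_seg[of N "Suc m"] by blast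
  thus ?thesis by simp
qed

end




theorem mainTheorem5:
  fixes E I F :: "'a set"
    and k :: "'a \<Rightarrow> nat"
    and p :: "'a \<Rightarrow> nat set set"
    and g :: "'a \<Rightarrow> nat \<Rightarrow> nat \<Rightarrow> 'a set"
    and d :: "'a \<Rightarrow> nat \<Rightarrow> 'a set"
    and y :: "nat \<Rightarrow> 'a"
  assumes "countable E"
    and "I \<noteq> {}" and "I \<subseteq> E"
    and "F \<subseteq> E" and "finite F"
    and "\<forall>\<xi>\<in>I. selective_ultrafilter (p \<xi>)"
    and "\<forall>\<xi>\<in>I. \<forall>\<eta>\<in>I. \<xi> \<noteq> \<eta> \<longrightarrow> rk_incomparable (p \<xi>) (p \<eta>)"
    and "\<forall>\<xi>\<in>I. \<forall>m. \<forall>j<k \<xi>. finite (g \<xi> m j) \<and> g \<xi> m j \<subseteq> E"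
    and "\<forall>\<xi>\<in>I. lin_indep {(j, m). j < k \<xi>} (\<lambda>(j, m). g \<xi> m j)"
    and "\<forall>\<xi>\<in>I. \<forall>j<k \<xi>. finite (d \<xi> j) \<and> d \<xi> j \<subseteq> E"
    and "inj y" and "range y \<subseteq> E"
  shows "\<exists>(b :: nat \<Rightarrow> nat) (r :: nat \<Rightarrow> 'a) (Es :: nat \<Rightarrow> 'a set).
     strict_mono b \<and> range r = I \<and> (\<forall>i. finite (Es i) \<and> Es i \<subseteq> E) \<and>
     F \<subseteq> Es 0 \<and>
     E = (\<Union>i. Es i) \<and>
     (\<forall>m. r m \<in> Es m) \<and>
     (\<forall>m. (\<Union>j<k (r m). d (r m) j) \<subseteq> Es m) \<and>
     (\<forall>m. (\<Union>{g \<xi> (b m) j | \<xi> j. \<xi> \<in> Es m \<inter> I \<and> j < k \<xi>}) \<union> Es m \<subseteq> Es (Suc m)) \<and>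
     (\<forall>m. lin_indep (Inl ` {..<k (r m)} \<union> Inr ` Es m)
            (\<lambda>x. case x of Inl j \<Rightarrow> g (r m) (b m) j | Inr \<mu> \<Rightarrow> {\<mu>})) \<and>
     (\<forall>\<xi>\<in>I. b ` (r -` {\<xi>}) \<in> p \<xi>) \<and>
     (\<exists>N :: nat \<Rightarrow> nat. strict_mono N \<and> (\<forall>i. {n. y n \<in> Es i} = {..<2 * N i}))"
proof -
  note cE = assms(1) and Ine = assms(2) and IE = assms(3) and FE = assms(4) and fF = assms(5)
    and sel = assms(6) and rk = assms(7) and gfin = assms(8) and li = assms(9) and dfin = assms(10)
    and iy = assms(11) and yE = assms(12)
  have cI: "countable I" using cE IE countable_subset by blast
  have "infinite (range y)" using iy by (rule range_inj_infinite)
  hence Ene: "E \<noteq> {}" using yE by auto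
  define e where "e = from_nat_into E"
  have eE: "range e \<subseteq> E" unfolding e_def using from_nat_into[OF Ene] by blast
  have esurj: "\<And>x. x \<in> E \<Longrightarrow> \<exists>n. e n = x" unfolding e_def using from_nat_into_surj[OF cE] by blast
  interpret M: mt E I F k g d y e
    by unfold_locales (use cI IE FE fF gfin dfin iy yE eE in auto)
  define idx where "idx = to_nat_on I"
  define badset where "badset N = (\<Union>\<xi>\<in>M.RR N. {n. \<not> good g k \<xi> (M.Wst N (Suc N)) n})" for N
  have badfin: "finite (badset N)" for N
  proof -
    have "\<And>\<xi>. \<xi> \<in> M.RR N \<Longrightarrow> finite {n. \<not> good g k \<xi> (M.Wst N (Suc N)) n}"
    proof -
      fix \<xi> assume "\<xi> \<in> M.RR N"
      hence "\<xi> \<in> I" using M.RR_I by blast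
      hence l: "lin_indep {(j, m). j < k \<xi>} (\<lambda>(j, m). g \<xi> m j)" using li by blast
      show "finite {n. \<not> good g k \<xi> (M.Wst N (Suc N)) n}"
        using bad_finite[of "M.Wst N (Suc N)" k \<xi> g] l M.W_fin by blast
    qed
    thus ?thesis unfolding badset_def using M.RR_fin by blast
  qed
  define H where "H N = Max (insert 0 (badset N))" for N
  have Hgood: "good g k \<xi> (M.Wst N (Suc N)) n" if "\<xi> \<in> M.RR N" "H N < n" for \<xi> N n
  proof (rule ccontr)
    assume "\<not> good g k \<xi> (M.Wst N (Suc N)) n"
    hence "n \<in> badset N" unfolding badset_def using that(1) by blast
    hence "n \<le> H N" unfolding H_def using badfin by simp
    thus False using that(2) by simp
  qed
  define c where "c \<xi> = H (idx \<xi>) + idx \<xi>" for \<xi>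
  obtain B where Bp: "\<forall>\<xi>\<in>I. B \<xi> \<in> p \<xi> \<and> (\<forall>a\<in>B \<xi>. c \<xi> < a)"
    and Bsp: "\<forall>\<xi>\<in>I. \<forall>\<eta>\<in>I. \<forall>a\<in>B \<xi>. \<forall>a'\<in>B \<eta>. a < a' \<longrightarrow> H a < a'"
    and Bdisj: "\<forall>\<xi>\<in>I. \<forall>\<eta>\<in>I. \<xi> \<noteq> \<eta> \<longrightarrow> B \<xi> \<inter> B \<eta> = {}"
    using UF_main[OF cI sel rk, of c H] by blast
  define X where "X = (\<Union>\<xi>\<in>I. B \<xi>)"
  obtain \<xi>0 where \<xi>0: "\<xi>0 \<in> I" using Ine by blast
  have "infinite (B \<xi>0)" using Bp \<xi>0 sel free_fin sel_free by blast
  hence Xinf: "infinite X" unfolding X_def using \<xi>0 by (meson UN_upper infinite_super)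
  define b where "b = enumerate X"
  have bsm: "strict_mono b" unfolding b_def using Xinf by (rule strict_mono_enumerate)
  have bX: "b m \<in> X" for m unfolding b_def using Xinf by (rule enumerate_in_set)
  have ex1: "\<exists>!\<xi>. \<xi> \<in> I \<and> b m \<in> B \<xi>" for m
  proof -
    obtain \<xi> where "\<xi> \<in> I" "b m \<in> B \<xi>" using bX[of m] unfolding X_def by blast
    moreover have "\<eta> = \<xi>" if "\<eta> \<in> I" "b m \<in> B \<eta>" for \<eta>
      using Bdisj that \<open>\<xi> \<in> I\<close> \<open>b m \<in> B \<xi>\<close> by blast
    ultimately show ?thesis by blast
  qed
  define r where "r m = (THE \<xi>. \<xi> \<in> I \<and> b m \<in> B \<xi>)" for m
  have rI: "r m \<in> I \<and> b m \<in> B (r m)" for m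
    unfolding r_def using theI'[OF ex1[of m]] .
  have runiq: "\<xi> \<in> I \<Longrightarrow> b m \<in> B \<xi> \<Longrightarrow> r m = \<xi>" for \<xi> m
    using ex1[of m] rI[of m] by blast
  have cb: "c (r m) < b m" for m using rI Bp by blast
  have Hb: "H (b m) < b (Suc m)" for m
  proof -
    have "b m < b (Suc m)" using bsm by (simp add: strict_mono_Suc_iff)
    thus ?thesis using Bsp rI[of m] rI[of "Suc m"] by blast
  qed
  define Mf where "Mf m = (case m of 0 \<Rightarrow> idx (r 0) | Suc m' \<Rightarrow> max (b m') (idx (r m)))" for m
  have idxMf: "idx (r m) \<le> Mf m" for m by (cases m) (auto simp: Mf_def)
  have Mfb: "Mf m \<le> b m" for m
  proof (cases m)
    case 0 thus ?thesis using cb[of 0] by (simp add: Mf_def c_def)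
  next
    case (Suc m')
    have "b m' < b m" using bsm Suc by (simp add: strict_mono_Suc_iff)
    moreover have "idx (r m) < b m" using cb[of m] by (simp add: c_def)
    ultimately show ?thesis using Suc by (simp add: Mf_def)
  qed
  have bMf: "b m \<le> Mf (Suc m)" for m by (simp add: Mf_def)
  have MfMf: "Mf m \<le> Mf (Suc m)" for m using Mfb bMf le_trans by blast
  have mMf: "m \<le> Suc (Mf m)" for m
  proof (cases m)
    case 0 thus ?thesis by simp
  next
    case (Suc m')
    have "m' \<le> b m'" using bsm by (rule strict_mono_imp_increasing)
    thus ?thesis using Suc by (simp add: Mf_def)
  qed
  have HMf: "H (Mf m) < b m" for m
  proof (cases m)
    case 0 thus ?thesis using cb[of 0] by (simp add: Mf_def c_def)
  next
    case (Suc m')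
    show ?thesis
    proof (cases "idx (r m) \<le> b m'")
      case True
      hence "Mf m = b m'" using Suc by (simp add: Mf_def)
      thus ?thesis using Hb[of m'] Suc by simp
    next
      case False
      hence "Mf m = idx (r m)" using Suc by (simp add: Mf_def)
      thus ?thesis using cb[of m] by (simp add: c_def)
    qed
  qed
  have rRR: "r m \<in> M.RR (Mf m)" for m
    using rI[of m] idxMf[of m] unfolding M.RR_def idx_def by blast
  define Es where "Es m = M.Wst (Mf m) m" for m
  have Esfin: "finite (Es i) \<and> Es i \<subseteq> E" for i unfolding Es_def using M.W_fin by blast
  have EsMono: "Es m \<subseteq> M.Wst (Mf (Suc m)) m" for m
    unfolding Es_def using M.W_mono_N[OF MfMf] .
  have g1: "range r = I"
  proof
    show "range r \<subseteq> I" using rI by blast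
    show "I \<subseteq> range r"
    proof
      fix \<xi> assume \<xi>: "\<xi> \<in> I"
      have "B \<xi> \<noteq> {}" using Bp \<xi> sel sel_uf uf_empty by metis
      then obtain a where a: "a \<in> B \<xi>" by blast
      hence "a \<in> X" unfolding X_def using \<xi> by blast
      then obtain m where "b m = a" using enumerate_Ex[OF Xinf] b_def by blast
      hence "r m = \<xi>" using runiq \<xi> a by blast
      thus "\<xi> \<in> range r" by blast
    qed
  qed
  have g2: "F \<subseteq> Es 0" unfolding Es_def by (rule M.W_F)
  have g3: "E = (\<Union>i. Es i)"
  proof
    show "E \<subseteq> (\<Union>i. Es i)"
    proof
      fix x assume "x \<in> E"
      then obtain n where "e n = x" using esurj by blast
      hence "x \<in> Es n" unfolding Es_def using M.W_e by blast
      thus "x \<in> (\<Union>i. Es i)" by blast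
    qed
    show "(\<Union>i. Es i) \<subseteq> E" using Esfin by blast
  qed
  have g4: "r m \<in> Es m" for m unfolding Es_def using rRR M.W_RR by blast
  have g5: "(\<Union>j<k (r m). d (r m) j) \<subseteq> Es m" for m
    unfolding Es_def using M.W_DD[OF rRR[of m], of m] unfolding M.DD_def .
  have g6: "(\<Union>{g \<xi> (b m) j | \<xi> j. \<xi> \<in> Es m \<inter> I \<and> j < k \<xi>}) \<union> Es m \<subseteq> Es (Suc m)" for m
  proof -
    have "(\<Union>{g \<xi> (b m) j | \<xi> j. \<xi> \<in> Es m \<inter> I \<and> j < k \<xi>}) \<subseteq> M.GG (Mf (Suc m)) (M.Wst (Mf (Suc m)) m)"
    proof
      fix x assume "x \<in> (\<Union>{g \<xi> (b m) j | \<xi> j. \<xi> \<in> Es m \<inter> I \<and> j < k \<xi>})"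
      then obtain \<xi> j where h: "\<xi> \<in> Es m" "\<xi> \<in> I" "j < k \<xi>" "x \<in> g \<xi> (b m) j" by blast
      have "\<xi> \<in> M.Wst (Mf (Suc m)) m" using h(1) EsMono by blast
      thus "x \<in> M.GG (Mf (Suc m)) (M.Wst (Mf (Suc m)) m)"
        unfolding M.GG_def using h bMf[of m] by blast
    qed
    moreover have "M.GG (Mf (Suc m)) (M.Wst (Mf (Suc m)) m) \<subseteq> Es (Suc m)"
      unfolding Es_def by (rule M.W_GG)
    moreover have "Es m \<subseteq> Es (Suc m)"
      using EsMono[of m] M.W_Suc[of "Mf (Suc m)" m] unfolding Es_def by blast
    ultimately show ?thesis by blast
  qed
  have g7: "lin_indep (Inl ` {..<k (r m)} \<union> Inr ` Es m)
            (\<lambda>x. case x of Inl j \<Rightarrow> g (r m) (b m) j | Inr \<mu> \<Rightarrow> {\<mu>})" for m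
  proof -
    have g1: "good g k (r m) (M.Wst (Mf m) (Suc (Mf m))) (b m)" using Hgood[OF rRR HMf] .
    have s1: "Es m \<subseteq> M.Wst (Mf m) (Suc (Mf m))" unfolding Es_def using M.W_mono_m[OF mMf] .
    have "good g k (r m) (Es m) (b m)" by (rule good_mono[OF s1 g1])
    thus ?thesis by (rule good_indep[OF conjunct1[OF Esfin]])
  qed
  have g8: "b ` (r -` {\<xi>}) \<in> p \<xi>" if \<xi>: "\<xi> \<in> I" for \<xi>
  proof -
    have "b ` (r -` {\<xi>}) = B \<xi>"
    proof
      show "b ` (r -` {\<xi>}) \<subseteq> B \<xi>" using rI by auto
      show "B \<xi> \<subseteq> b ` (r -` {\<xi>})"
      proof
        fix a assume a: "a \<in> B \<xi>"
        hence "a \<in> X" unfolding X_def using \<xi> by blast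
        then obtain m where m: "b m = a" using enumerate_Ex[OF Xinf] b_def by blast
        hence "r m = \<xi>" using runiq \<xi> a by blast
        thus "a \<in> b ` (r -` {\<xi>})" using m by blast
      qed
    qed
    thus ?thesis using Bp \<xi> by simp
  qed
  define N where "N i = M.Kf (Es i)" for i
  have g9: "strict_mono N"
  proof (rule strict_mono_Suc_iff[THEN iffD2], rule allI)
    fix m
    have "M.Kf (Es m) \<le> M.Kf (M.Wst (Mf (Suc m)) m)"
      using EsMono M.W_fin by (intro M.Kf_mono) blast+
    also have "\<dots> < M.Kf (M.Wst (Mf (Suc m)) (Suc m))" by (rule M.W_strict)
    finally show "N m < N (Suc m)" unfolding N_def Es_def .
  qed
  have g10: "{n. y n \<in> Es i} = {..<2 * N i}" for i
    unfolding N_def Es_def by (rule M.W_seg)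
  show ?thesis
    apply (rule exI[of _ b], rule exI[of _ r], rule exI[of _ Es])
    apply (intro conjI)
    apply (rule bsm)
    apply (rule g1)
    apply (intro allI, rule Esfin)
    apply (rule g2)
    apply (rule g3)
    apply (intro allI, rule g4)
    apply (intro allI, rule g5)
    apply (intro allI, rule g6)
    apply (intro allI, rule g7)
    apply (intro ballI, erule g8)
    apply (rule exI[of _ N], intro conjI allI, rule g9, rule g10)
    done
qed


end
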